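(* There exists a disconnected biconvex bipartite graph that is not an induced subgraph of any connected biconvex bipartite graph.
   Context: A bipartite graph $G=(A\cup B,E)$ is biconvex if there are orderings of $A$ and of $B$ such that for every $a\in A$ the neighborhood $N(a)$ is a set of consecutive vertices in the ordering of $B$, and for every $b\in B$ the neighborhood $N(b)$ is a set of consecutive vertices in the ordering of $A$. *)

theory Defs
  imports Main
begin

definition graph :: "'a set \<Rightarrow> ('a \<Rightarrow> 'a \<Rightarrow> bool) \<Rightarrow> bool" where
  "graph V E \<longleftrightarrow> finite V \<and> (\<forall>u v. E u v \<longrightarrow> u \<in> V \<and> v \<in> V \<and> u \<noteq> v \<and> E v u)"

definition nbhd :: "('a \<Rightarrow> 'a \<Rightarrow> bool) \<Rightarrow> 'a \<Rightarrow> 'a set" where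
  "nbhd E v = {u. E v u}"

definition bipartition :: "'a set \<Rightarrow> ('a \<Rightarrow> 'a \<Rightarrow> bool) \<Rightarrow> 'a set \<Rightarrow> 'a set \<Rightarrow> bool" where
  "bipartition V E A B \<longleftrightarrow> A \<inter> B = {} \<and> A \<union> B = V \<and>
     (\<forall>u v. E u v \<longrightarrow> (u \<in> A \<and> v \<in> B) \<or> (u \<in> B \<and> v \<in> A))"

definition consecutive :: "'a set \<Rightarrow> ('a \<Rightarrow> nat) \<Rightarrow> 'a set \<Rightarrow> bool" where
  "consecutive S ord X \<longleftrightarrow> X \<subseteq> S \<and>
     (\<forall>x\<in>X. \<forall>y\<in>X. \<forall>z\<in>S. ord x \<le> ord z \<and> ord z \<le> ord y \<longrightarrow> z \<in> X)"

definition biconvex_wrt :: "'a set \<Rightarrow> ('a \<Rightarrow> 'a \<Rightarrow> bool) \<Rightarrow> 'a set \<Rightarrow> 'a set \<Rightarrow> bool" where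
  "biconvex_wrt V E A B \<longleftrightarrow> bipartition V E A B \<and>
     (\<exists>ordA ordB. inj_on ordA A \<and> inj_on ordB B \<and>
        (\<forall>a\<in>A. consecutive B ordB (nbhd E a)) \<and>
        (\<forall>b\<in>B. consecutive A ordA (nbhd E b)))"

definition biconvex_graph :: "'a set \<Rightarrow> ('a \<Rightarrow> 'a \<Rightarrow> bool) \<Rightarrow> bool" where
  "biconvex_graph V E \<longleftrightarrow> graph V E \<and> (\<exists>A B. biconvex_wrt V E A B)"

definition connected_graph :: "'a set \<Rightarrow> ('a \<Rightarrow> 'a \<Rightarrow> bool) \<Rightarrow> bool" where
  "connected_graph V E \<longleftrightarrow> V \<noteq> {} \<and> (\<forall>u\<in>V. \<forall>v\<in>V. E\<^sup>*\<^sup>* u v)"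

definition disconnected_graph :: "'a set \<Rightarrow> ('a \<Rightarrow> 'a \<Rightarrow> bool) \<Rightarrow> bool" where
  "disconnected_graph V E \<longleftrightarrow> V \<noteq> {} \<and> \<not> connected_graph V E"

definition induced_subgraph :: "'a set \<Rightarrow> ('a \<Rightarrow> 'a \<Rightarrow> bool) \<Rightarrow> 'b set \<Rightarrow> ('b \<Rightarrow> 'b \<Rightarrow> bool) \<Rightarrow> bool" where
  "induced_subgraph V E V' E' \<longleftrightarrow> (\<exists>f. inj_on f V \<and> f ` V \<subseteq> V' \<and>
     (\<forall>u\<in>V. \<forall>v\<in>V. E u v \<longleftrightarrow> E' (f u) (f v)))"

end

theory Submission
  imports Defs
begin


definition Xe :: "nat \<Rightarrow> nat \<Rightarrow> bool" where
  "Xe a b \<longleftrightarrow> (a,b) \<in> {(0,4),(1,3),(1,4),(1,5),(2,4),(2,5),(2,6)} \<or>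
               (b,a) \<in> {(0,4),(1,3),(1,4),(1,5),(2,4),(2,5),(2,6)}"

lemma Xe_sides: "Xe a b \<Longrightarrow> (a < 3 \<and> 3 \<le> b \<and> b < 7) \<or> (3 \<le> a \<and> a < 7 \<and> b < 3)"
  unfolding Xe_def by auto

lemma Xe_conv1: "Xe r i \<Longrightarrow> Xe r k \<Longrightarrow> i \<le> j \<Longrightarrow> j \<le> k \<Longrightarrow> r < 3 \<Longrightarrow> 3 \<le> j \<Longrightarrow> Xe r j"
proof -
  assume a: "Xe r i" "Xe r k" "i \<le> j" "j \<le> k" "r < 3" "3 \<le> j"
  have "k < 7" using Xe_sides[OF a(2)] a by auto
  hence "j = 3 \<or> j = 4 \<or> j = 5 \<or> j = 6" using a by auto
  moreover have "r = 0 \<or> r = 1 \<or> r = 2" using a by auto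
  ultimately show ?thesis using a unfolding Xe_def by auto
qed

lemma Xe_conv2: "Xe r i \<Longrightarrow> Xe r k \<Longrightarrow> i \<le> j \<Longrightarrow> j \<le> k \<Longrightarrow> 3 \<le> r \<Longrightarrow> j < 3 \<Longrightarrow> Xe r j"
proof -
  assume a: "Xe r i" "Xe r k" "i \<le> j" "j \<le> k" "3 \<le> r" "j < 3"
  have "r < 7" using Xe_sides[OF a(1)] a by auto
  hence "r = 3 \<or> r = 4 \<or> r = 5 \<or> r = 6" using a by auto
  moreover have "j = 0 \<or> j = 1 \<or> j = 2" using a by auto
  ultimately show ?thesis using a unfolding Xe_def by auto
qed

definition EH :: "nat \<Rightarrow> nat \<Rightarrow> bool" where
  "EH u v \<longleftrightarrow> u < 35 \<and> v < 35 \<and> u div 7 = v div 7 \<and> Xe (u mod 7) (v mod 7)"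

lemma Xe_irrefl: "\<not> Xe a a" unfolding Xe_def by auto
lemma Xe_sym: "Xe a b \<Longrightarrow> Xe b a" unfolding Xe_def by auto

lemma EH_graph: "graph {..<35} EH"
  unfolding graph_def EH_def
proof (rule conjI, simp, intro allI impI)
  fix u v :: nat
  assume h: "u < 35 \<and> v < 35 \<and> u div 7 = v div 7 \<and> Xe (u mod 7) (v mod 7)"
  have "u \<noteq> v" using h Xe_irrefl by metis
  then show "u \<in> {..<35} \<and> v \<in> {..<35} \<and> u \<noteq> v \<and> v < 35 \<and> u < 35 \<and> v div 7 = u div 7 \<and> Xe (v mod 7) (u mod 7)"
    using h Xe_sym by auto
qed

definition HA :: "nat set" where "HA = {u. u < 35 \<and> u mod 7 < 3}"
definition HB :: "nat set" where "HB = {u. u < 35 \<and> 3 \<le> u mod 7}"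

lemma EH_bip: "bipartition {..<35} EH HA HB"
  unfolding bipartition_def HA_def HB_def EH_def
  using Xe_sides by auto

lemma div_between: "(x::nat) \<le> z \<Longrightarrow> z \<le> y \<Longrightarrow> x div 7 = y div 7 \<Longrightarrow> z div 7 = x div 7"
  by (metis div_le_mono le_antisym)

lemma mod_between: "(x::nat) \<le> z \<Longrightarrow> z div 7 = x div 7 \<Longrightarrow> x mod 7 \<le> z mod 7"
  by (metis add_le_cancel_left div_mult_mod_eq)

lemma EH_consA: "a \<in> HA \<Longrightarrow> consecutive HB id (nbhd EH a)"
  unfolding consecutive_def
proof (intro conjI ballI impI)
  assume a: "a \<in> HA"
  show "nbhd EH a \<subseteq> HB" using a EH_bip unfolding bipartition_def nbhd_def HA_def HB_def by auto
  fix x y z assume x: "x \<in> nbhd EH a" and y: "y \<in> nbhd EH a" and z: "z \<in> HB" and o: "id x \<le> id z \<and> id z \<le> id y"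
  have ex: "EH a x" "EH a y" using x y unfolding nbhd_def by auto
  have zd: "z div 7 = x div 7" using div_between[of x z y] o ex unfolding EH_def by auto
  have "x mod 7 \<le> z mod 7" using mod_between[of x z] o zd by auto
  moreover have "z mod 7 \<le> y mod 7" using mod_between[of z y] o zd ex unfolding EH_def by auto
  ultimately have "Xe (a mod 7) (z mod 7)"
    using Xe_conv1[of "a mod 7" "x mod 7" "y mod 7" "z mod 7"] ex a z unfolding EH_def HA_def HB_def by auto
  then show "z \<in> nbhd EH a" using ex zd z unfolding nbhd_def EH_def HB_def by auto
qed

lemma EH_consB: "b \<in> HB \<Longrightarrow> consecutive HA id (nbhd EH b)"
  unfolding consecutive_def
proof (intro conjI ballI impI)
  assume b: "b \<in> HB"
  show "nbhd EH b \<subseteq> HA" using b EH_bip unfolding bipartition_def nbhd_def HA_def HB_def by auto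
  fix x y z assume x: "x \<in> nbhd EH b" and y: "y \<in> nbhd EH b" and z: "z \<in> HA" and o: "id x \<le> id z \<and> id z \<le> id y"
  have ex: "EH b x" "EH b y" using x y unfolding nbhd_def by auto
  have zd: "z div 7 = x div 7" using div_between[of x z y] o ex unfolding EH_def by auto
  have "x mod 7 \<le> z mod 7" using mod_between[of x z] o zd by auto
  moreover have "z mod 7 \<le> y mod 7" using mod_between[of z y] o zd ex unfolding EH_def by auto
  ultimately have "Xe (b mod 7) (z mod 7)"
    using Xe_conv2[of "b mod 7" "x mod 7" "y mod 7" "z mod 7"] ex b z unfolding EH_def HA_def HB_def by auto
  then show "z \<in> nbhd EH b" using ex zd z unfolding nbhd_def EH_def HA_def by auto
qed

lemma EH_biconvex: "biconvex_graph {..<35} EH"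
  unfolding biconvex_graph_def biconvex_wrt_def
  using EH_graph EH_bip EH_consA EH_consB by (metis inj_on_id)

lemma EH_comp: "EH\<^sup>*\<^sup>* u v \<Longrightarrow> v div 7 = u div 7"
  by (induction rule: rtranclp_induct) (auto simp: EH_def)

lemma EH_disconnected: "disconnected_graph {..<35} EH"
proof -
  have "(0::nat) \<in> {..<35}" "(7::nat) \<in> {..<35}" by auto
  then show ?thesis using EH_comp[of 0 7] unfolding disconnected_graph_def connected_graph_def by fastforce
qed




definition between :: "('a \<Rightarrow> nat) \<Rightarrow> 'a \<Rightarrow> 'a \<Rightarrow> 'a \<Rightarrow> bool" where
  "between rk a b c \<longleftrightarrow> (rk a < rk b \<and> rk b < rk c) \<or> (rk c < rk b \<and> rk b < rk a)"

lemma consec_between: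
  assumes "consecutive S rk X" "a \<in> X" "c \<in> X" "b \<in> S" "between rk a b c"
  shows "b \<in> X"
  using assms unfolding consecutive_def between_def by (meson less_imp_le)

lemma sides_arith:
  fixes y z a b c :: nat
  assumes "(y < a \<and> a < z) \<or> (z < a \<and> a < y)" "(b < a \<and> a < c) \<or> (c < a \<and> a < b)"
    "y \<noteq> b" "y \<noteq> c" "\<not> ((b < y \<and> y < a) \<or> (a < y \<and> y < b))" "\<not> ((a < y \<and> y < c) \<or> (c < y \<and> y < a))"
    "z \<noteq> b" "z \<noteq> c" "\<not> ((b < z \<and> z < a) \<or> (a < z \<and> z < b))" "\<not> ((a < z \<and> z < c) \<or> (c < z \<and> z < a))"
  shows "(((y < b \<and> b < a) \<or> (a < b \<and> b < y)) \<and> ((z < c \<and> c < a) \<or> (a < c \<and> c < z))) \<or>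
         (((z < b \<and> b < a) \<or> (a < b \<and> b < z)) \<and> ((y < c \<and> c < a) \<or> (a < c \<and> c < y)))"
proof -
  have h5: "\<not> (b < y \<and> y < a)" "\<not> (a < y \<and> y < b)" using assms(5) by simp_all
  have h6: "\<not> (a < y \<and> y < c)" "\<not> (c < y \<and> y < a)" using assms(6) by simp_all
  have h9: "\<not> (b < z \<and> z < a)" "\<not> (a < z \<and> z < b)" using assms(9) by simp_all
  have h10: "\<not> (a < z \<and> z < c)" "\<not> (c < z \<and> z < a)" using assms(10) by simp_all
  from assms(1,2) consider (1) "y<a" "a<z" "b<a" "a<c" | (2) "y<a" "a<z" "c<a" "a<b"
    | (3) "z<a" "a<y" "b<a" "a<c" | (4) "z<a" "a<y" "c<a" "a<b" by blast
  then show ?thesis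
  proof cases
    case 1
    have "y < b" using 1 assms(3) h5 by linarith
    moreover have "c < z" using 1 assms(8) h10 by linarith
    ultimately show ?thesis using 1 by blast
  next
    case 2
    have "y < c" using 2 assms(4) h6 by linarith
    moreover have "b < z" using 2 assms(7) h9 by linarith
    ultimately show ?thesis using 2 by blast
  next
    case 3
    have "z < b" using 3 assms(7) h9 by linarith
    moreover have "c < y" using 3 assms(4) h6 by linarith
    ultimately show ?thesis using 3 by blast
  next
    case 4
    have "b < y" using 4 assms(3) h5 by linarith
    moreover have "z < c" using 4 assms(8) h10 by linarith
    ultimately show ?thesis using 4 by blast
  qed
qed

lemma sides_btw:
  assumes "between rk y a z" "between rk b a c" "rk y \<noteq> rk b" "rk y \<noteq> rk c"
    "\<not> between rk b y a" "\<not> between rk a y c"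
    "rk z \<noteq> rk b" "rk z \<noteq> rk c" "\<not> between rk b z a" "\<not> between rk a z c"
  shows "(between rk y b a \<and> between rk z c a) \<or> (between rk z b a \<and> between rk y c a)"
  using assms unfolding between_def by (rule sides_arith)
lemma EH_same: "m < 5 \<Longrightarrow> a < 7 \<Longrightarrow> b < 7 \<Longrightarrow> EH (7*m+a) (7*m+b) = Xe a b"
  unfolding EH_def by auto

lemma EH_diff: "m < 5 \<Longrightarrow> m' < 5 \<Longrightarrow> m \<noteq> m' \<Longrightarrow> a < 7 \<Longrightarrow> b < 7 \<Longrightarrow> \<not> EH (7*m+a) (7*m'+b)"
  unfolding EH_def by auto

lemma three_pos: "(a::nat) \<noteq> b \<Longrightarrow> b \<noteq> c \<Longrightarrow> a \<noteq> c \<Longrightarrow>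
  ((a < b \<and> b < c) \<or> (c < b \<and> b < a)) \<or> ((b < a \<and> a < c) \<or> (c < a \<and> a < b)) \<or> ((a < c \<and> c < b) \<or> (b < c \<and> c < a))"
  by linarith

lemma pigeon5:
  fixes Pr :: "nat \<Rightarrow> bool"
  assumes "\<And>i j k. i < 5 \<Longrightarrow> j < 5 \<Longrightarrow> k < 5 \<Longrightarrow> i \<noteq> j \<Longrightarrow> j \<noteq> k \<Longrightarrow> i \<noteq> k \<Longrightarrow> Pr i \<Longrightarrow> Pr j \<Longrightarrow> Pr k \<Longrightarrow> False"
  and "\<And>i j k. i < 5 \<Longrightarrow> j < 5 \<Longrightarrow> k < 5 \<Longrightarrow> i \<noteq> j \<Longrightarrow> j \<noteq> k \<Longrightarrow> i \<noteq> k \<Longrightarrow> \<not> Pr i \<Longrightarrow> \<not> Pr j \<Longrightarrow> \<not> Pr k \<Longrightarrow> False"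
  shows False
proof -
  have a: "\<not> (Pr i \<and> Pr j \<and> Pr k)" "\<not> (\<not> Pr i \<and> \<not> Pr j \<and> \<not> Pr k)"
    if "i < 5" "j < 5" "k < 5" "i \<noteq> j" "j \<noteq> k" "i \<noteq> k" for i j k
    using assms that by blast+
  show False
    using a[of 0 1 2] a[of 0 1 3] a[of 0 1 4] a[of 0 2 3] a[of 0 2 4] a[of 0 3 4]
      a[of 1 2 3] a[of 1 2 4] a[of 1 3 4] a[of 2 3 4] by auto
qed


locale bcx =
  fixes P Q :: "'a set" and oP oQ :: "'a \<Rightarrow> nat" and E :: "'a \<Rightarrow> 'a \<Rightarrow> bool"
  assumes disj: "P \<inter> Q = {}"
  and bip: "\<And>u v. E u v \<Longrightarrow> (u \<in> P \<and> v \<in> Q) \<or> (u \<in> Q \<and> v \<in> P)"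
  and esym: "\<And>u v. E u v \<Longrightarrow> E v u"
  and injP: "inj_on oP P" and injQ: "inj_on oQ Q"
  and cP: "\<And>p. p \<in> P \<Longrightarrow> consecutive Q oQ (nbhd E p)"
  and cQ: "\<And>q. q \<in> Q \<Longrightarrow> consecutive P oP (nbhd E q)"
begin

lemma intQ: "E p a \<Longrightarrow> E p c \<Longrightarrow> a \<in> Q \<Longrightarrow> b \<in> Q \<Longrightarrow> between oQ a b c \<Longrightarrow> E p b"
proof -
  assume h: "E p a" "E p c" "a \<in> Q" "b \<in> Q" "between oQ a b c"
  have "p \<in> P" using bip[OF h(1)] h(3) disj by auto
  then show "E p b" using consec_between[OF cP[of p], of a c b] h unfolding nbhd_def by auto
qed

lemma intP: "E p a \<Longrightarrow> E p c \<Longrightarrow> a \<in> P \<Longrightarrow> b \<in> P \<Longrightarrow> between oP a b c \<Longrightarrow> E p b"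
proof -
  assume h: "E p a" "E p c" "a \<in> P" "b \<in> P" "between oP a b c"
  have "p \<in> Q" using bip[OF h(1)] h(3) disj by auto
  then show "E p b" using consec_between[OF cQ[of p], of a c b] h unfolding nbhd_def by auto
qed

lemma neqQ: "a \<in> Q \<Longrightarrow> b \<in> Q \<Longrightarrow> a \<noteq> b \<Longrightarrow> oQ a \<noteq> oQ b"
  using injQ by (meson inj_on_eq_iff)
lemma neqP: "a \<in> P \<Longrightarrow> b \<in> P \<Longrightarrow> a \<noteq> b \<Longrightarrow> oP a \<noteq> oP b"
  using injP by (meson inj_on_eq_iff)

lemma core:
  fixes v0 v1 v2 v3 v5 y y2 :: 'a and Xs :: "'a set"
  defines "D \<equiv> {u. u \<notin> Xs \<and> (\<forall>x\<in>Xs. \<not> E u x)}"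
  assumes P0: "v0 \<in> P" "v1 \<in> P" "v2 \<in> P" and Q0: "v3 \<in> Q" "v5 \<in> Q"
  and e05: "E v0 v5" and e13: "E v1 v3" and e23: "E v2 v3" and n15: "\<not> E v1 v5" and n25: "\<not> E v2 v5"
  and bA: "between oP v2 v0 v1"
  and yQ: "y \<in> Q" and bB: "between oQ y v5 v3"
  and XsQ: "\<And>x. x \<in> Xs \<Longrightarrow> x \<in> Q \<Longrightarrow> x = v5 \<or> between oQ y v5 x"
  and XsP: "\<And>x. x \<in> Xs \<Longrightarrow> x \<in> P \<Longrightarrow> x = v0 \<or> (E x v3 \<and> \<not> E x v5)"
  and inX: "v0 \<in> Xs" "v1 \<in> Xs" "v2 \<in> Xs" "v3 \<in> Xs" "v5 \<in> Xs"
  and yD: "y \<in> D" "y2 \<in> D" "E y y2"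
  and conn: "E\<^sup>*\<^sup>* y v5"
  shows False
proof -
  define R where "R a b \<longleftrightarrow> E a b \<and> a \<in> D \<and> b \<in> D" for a b
  define L where "L s \<longleftrightarrow> s \<in> Q \<and> s \<noteq> v5 \<and> \<not> between oQ y v5 s" for s
  have inv: "t \<in> D \<and> (t \<in> Q \<longrightarrow> L t) \<and> (t \<in> P \<longrightarrow> (\<forall>s. E t s \<longrightarrow> L s))"
    if "R\<^sup>*\<^sup>* y t" for t
    using that
  proof (induction rule: rtranclp_induct)
    case base
    have "y \<noteq> v5" using yD(1) inX(5) unfolding D_def by auto
    moreover have "y \<notin> P" using yQ disj by auto
    ultimately show ?case using yD(1) yQ unfolding L_def between_def by auto
  next
    case (step a t)
    have Eat: "E a t" "a \<in> D" "t \<in> D" using step(2) unfolding R_def by auto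
    show ?case
    proof (cases "t \<in> Q")
      case True
      then have "a \<in> P" "t \<notin> P" using bip[OF Eat(1)] disj by auto
      then show ?thesis using step(3) Eat True by auto
    next
      case False
      then have tP: "t \<in> P" and aQ: "a \<in> Q" using bip[OF Eat(1)] by auto
      have La: "L a" using step(3) aQ by auto
      have "L s" if Ets: "E t s" for s
      proof -
        have sQ: "s \<in> Q" using bip[OF Ets] tP disj by auto
        have nt5: "\<not> E t v5" using Eat(3) inX(5) unfolding D_def by auto
        then have s5: "s \<noteq> v5" using Ets by auto
        have "\<not> between oQ y v5 s"
        proof
          assume bs: "between oQ y v5 s"
          have "oQ a \<noteq> oQ v5" using neqQ[OF aQ Q0(2)] La unfolding L_def by auto
          then have "between oQ a v5 s" using bs La unfolding L_def between_def by auto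
          then have "E t v5" using intQ[OF esym[OF Eat(1)] Ets aQ Q0(2)] by auto
          then show False using nt5 by auto
        qed
        then show ?thesis using sQ s5 unfolding L_def by auto
      qed
      then show ?thesis using Eat(3) False by auto
    qed
  qed
  have nbr: "\<exists>p. E t p \<and> p \<in> D" if "R\<^sup>*\<^sup>* y t" for t
    using that
  proof (induction rule: rtranclp_induct)
    case base then show ?case using yD by auto
  next
    case (step a t) then show ?case using esym unfolding R_def by auto
  qed
  have exit: "R\<^sup>*\<^sup>* y b \<or> (\<exists>c w. R\<^sup>*\<^sup>* y c \<and> E c w \<and> w \<notin> D)" if "E\<^sup>*\<^sup>* y b" for b
    using that
  proof (induction rule: rtranclp_induct)
    case base then show ?case by auto
  next
    case (step a b)
    show ?case
    proof (cases "R\<^sup>*\<^sup>* y a")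
      case True
      have "a \<in> D" using inv[OF True] by auto
      then show ?thesis
      proof (cases "b \<in> D")
        case True
        then have "R a b" using \<open>a \<in> D\<close> step(2) unfolding R_def by auto
        then show ?thesis using \<open>R\<^sup>*\<^sup>* y a\<close> by auto
      next
        case False
        then show ?thesis using \<open>R\<^sup>*\<^sup>* y a\<close> step(2) by auto
      qed
    next
      case False
      then show ?thesis using step(3) by auto
    qed
  qed
  have "\<not> R\<^sup>*\<^sup>* y v5" using inv[of v5] inX(5) unfolding D_def by auto
  then obtain c w where cw: "R\<^sup>*\<^sup>* y c" "E c w" "w \<notin> D" using exit[OF conn] by auto
  have cD: "c \<in> D" using inv[OF cw(1)] by auto
  have wX: "w \<notin> Xs" using cD cw(2) unfolding D_def by auto
  then obtain x where xX: "x \<in> Xs" "E w x" using cw(3) unfolding D_def by auto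
  obtain p where pc: "E c p" "p \<in> D" using nbr[OF cw(1)] by auto
  have cX: "\<And>z. z \<in> Xs \<Longrightarrow> \<not> E c z" "c \<notin> Xs" using cD unfolding D_def by auto
  have pX: "\<And>z. z \<in> Xs \<Longrightarrow> \<not> E p z" "p \<notin> Xs" using pc(2) unfolding D_def by auto
  have v12: "v1 \<noteq> v0" "v2 \<noteq> v0" using e05 n15 n25 by auto
  show False
  proof (cases "c \<in> Q")
    case True
    then have wP: "w \<in> P" using bip[OF cw(2)] disj by auto
    have xQ: "x \<in> Q" using bip[OF xX(2)] wP disj by auto
    have Lc: "L c" using inv[OF cw(1)] True by auto
    have Ew5: "E w v5"
    proof (cases "x = v5")
      case True then show ?thesis using xX by auto
    next
      case False
      then have bx: "between oQ y v5 x" using XsQ[OF xX(1) xQ] by auto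
      have "oQ c \<noteq> oQ v5" using neqQ[OF True Q0(2)] Lc unfolding L_def by auto
      then have "between oQ c v5 x" using bx Lc unfolding L_def between_def by auto
      then show ?thesis using intQ[OF esym[OF cw(2)] xX(2) True Q0(2)] by auto
    qed
    have w12: "oP w \<noteq> oP v1" "oP w \<noteq> oP v2" using neqP[OF wP P0(2)] neqP[OF wP P0(3)] wX inX by auto
    have bw: "between oP v2 w v1"
    proof (rule ccontr)
      assume "\<not> between oP v2 w v1"
      then have "between oP w v2 v0 \<or> between oP w v1 v0" using bA w12 unfolding between_def by auto
      then show False
      proof
        assume "between oP w v2 v0"
        then have "E v5 v2" using intP[OF esym[OF Ew5] esym[OF e05] wP P0(3)] by auto
        then show False using n25 esym by auto
      next
        assume "between oP w v1 v0"
        then have "E v5 v1" using intP[OF esym[OF Ew5] esym[OF e05] wP P0(2)] by auto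
        then show False using n15 esym by auto
      qed
    qed
    have pP: "p \<in> P" using bip[OF pc(1)] True disj by auto
    have p12: "oP p \<noteq> oP v1" "oP p \<noteq> oP v2" using neqP[OF pP P0(2)] neqP[OF pP P0(3)] pX inX by auto
    have bp: "between oP v2 p v1"
    proof (rule ccontr)
      assume "\<not> between oP v2 p v1"
      then have "between oP p v2 w \<or> between oP p v1 w" using bw p12 unfolding between_def by auto
      then show False
      proof
        assume "between oP p v2 w"
        then have "E c v2" using intP[OF pc(1) cw(2) pP P0(3)] by auto
        then show False using cX inX by auto
      next
        assume "between oP p v1 w"
        then have "E c v1" using intP[OF pc(1) cw(2) pP P0(2)] by auto
        then show False using cX inX by auto
      qed
    qed
    have "E v3 p" using intP[OF esym[OF e23] esym[OF e13] P0(3) pP bp] .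
    then show False using pX inX esym by blast
  next
    case False
    then have cP': "c \<in> P" and wQ: "w \<in> Q" using bip[OF cw(2)] by auto
    have Lw: "L w" using inv[OF cw(1)] cP' cw(2) by auto
    have ow5: "oQ w \<noteq> oQ v5" using neqQ[OF wQ Q0(2)] Lw unfolding L_def by auto
    have bw: "between oQ w v5 v3" using Lw bB ow5 unfolding L_def between_def by auto
    have key: "\<not> E w z" if "z \<in> Xs" "z \<in> P" "z \<noteq> v0" for z
    proof
      assume Ewz: "E w z"
      have "E z v3" "\<not> E z v5" using XsP[OF that(1,2)] that(3) by auto
      then show False using intQ[OF esym[OF Ewz] \<open>E z v3\<close> wQ Q0(2) bw] by auto
    qed
    have xP: "x \<in> P" using bip[OF xX(2)] wQ disj by auto
    have x0: "x = v0" using key[OF xX(1) xP] xX(2) by auto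
    have nw1: "\<not> E w v1" and nw2: "\<not> E w v2" using key[OF inX(2) P0(2) v12(1)] key[OF inX(3) P0(3) v12(2)] by auto
    have c12: "oP c \<noteq> oP v1" "oP c \<noteq> oP v2" using neqP[OF cP' P0(2)] neqP[OF cP' P0(3)] cX inX by auto
    have bc: "between oP v2 c v1"
    proof (rule ccontr)
      assume "\<not> between oP v2 c v1"
      then have "between oP c v2 v0 \<or> between oP c v1 v0" using bA c12 unfolding between_def by auto
      then show False
      proof
        assume "between oP c v2 v0"
        then have "E w v2" using intP[OF esym[OF cw(2)] ] xX(2) x0 cP' P0(3) by auto
        then show False using nw2 by auto
      next
        assume "between oP c v1 v0"
        then have "E w v1" using intP[OF esym[OF cw(2)] ] xX(2) x0 cP' P0(2) by auto
        then show False using nw1 by auto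
      qed
    qed
    have "E v3 c" using intP[OF esym[OF e23] esym[OF e13] P0(3) cP' bc] .
    then show False using cX inX esym by blast
  qed
qed

lemma middle:
  fixes v0 v1 v2 v3 v4 v5 v6 y y2 z z2 :: 'a
  defines "Xs \<equiv> {v0,v1,v2,v3,v4,v5,v6}"
  defines "D \<equiv> {u. u \<notin> Xs \<and> (\<forall>x\<in>Xs. \<not> E u x)}"
  assumes P0: "v0 \<in> P" "v1 \<in> P" "v2 \<in> P" and Q0: "v3 \<in> Q" "v4 \<in> Q" "v5 \<in> Q" "v6 \<in> Q"
  and e: "E v0 v3" "E v0 v4" "E v0 v5" "E v1 v3" "E v1 v4" "E v1 v6" "E v2 v3"
  and n: "\<not> E v0 v6" "\<not> E v1 v5" "\<not> E v2 v4" "\<not> E v2 v5" "\<not> E v2 v6"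
  and yz: "y \<in> Q" "z \<in> Q" "y \<in> D" "y2 \<in> D" "z \<in> D" "z2 \<in> D" "E y y2" "E z z2"
  and byz: "between oQ y v3 z"
  and conn: "E\<^sup>*\<^sup>* y v5" "E\<^sup>*\<^sup>* y v6" "E\<^sup>*\<^sup>* z v5" "E\<^sup>*\<^sup>* z v6"
  shows False
proof -
  have inX: "v0 \<in> Xs" "v1 \<in> Xs" "v2 \<in> Xs" "v3 \<in> Xs" "v4 \<in> Xs" "v5 \<in> Xs" "v6 \<in> Xs"
    unfolding Xs_def by auto
  have XQ: "x = v3 \<or> x = v4 \<or> x = v5 \<or> x = v6" if "x \<in> Xs" "x \<in> Q" for x
    using that P0 disj unfolding Xs_def by auto
  have XP: "x = v0 \<or> x = v1 \<or> x = v2" if "x \<in> Xs" "x \<in> P" for x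
    using that Q0 disj unfolding Xs_def by auto
  have "v5 \<noteq> v6" "v3 \<noteq> v5" "v3 \<noteq> v6" "v4 \<noteq> v5" "v4 \<noteq> v6" "v3 \<noteq> v4"
    using e n by auto
  then have dQ: "oQ v5 \<noteq> oQ v6" "oQ v3 \<noteq> oQ v5" "oQ v3 \<noteq> oQ v6" "oQ v4 \<noteq> oQ v5" "oQ v4 \<noteq> oQ v6" "oQ v3 \<noteq> oQ v4"
    using neqQ[OF Q0(3) Q0(4)] neqQ[OF Q0(1) Q0(3)] neqQ[OF Q0(1) Q0(4)] neqQ[OF Q0(2) Q0(3)]
      neqQ[OF Q0(2) Q0(4)] neqQ[OF Q0(1) Q0(2)] by auto
  have "v0 \<noteq> v1" "v0 \<noteq> v2" "v1 \<noteq> v2" using e n by auto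
  then have dP: "oP v0 \<noteq> oP v1" "oP v0 \<noteq> oP v2" "oP v1 \<noteq> oP v2"
    using neqP[OF P0(1) P0(2)] neqP[OF P0(1) P0(3)] neqP[OF P0(2) P0(3)] by auto
  have tfacts: "oQ t \<noteq> oQ v3 \<and> oQ t \<noteq> oQ v5 \<and> oQ t \<noteq> oQ v6 \<and> \<not> between oQ v5 t v3 \<and> \<not> between oQ v3 t v6"
    if "t \<in> Q" "t \<in> D" for t
  proof -
    have tX: "t \<notin> Xs" "\<And>x. x \<in> Xs \<Longrightarrow> \<not> E t x" using that(2) unfolding D_def by auto
    have "t \<noteq> v3" "t \<noteq> v5" "t \<noteq> v6" using tX(1) inX by auto
    then have "oQ t \<noteq> oQ v3" "oQ t \<noteq> oQ v5" "oQ t \<noteq> oQ v6"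
      using neqQ[OF that(1) Q0(1)] neqQ[OF that(1) Q0(3)] neqQ[OF that(1) Q0(4)] by auto
    moreover have "\<not> between oQ v5 t v3"
    proof
      assume "between oQ v5 t v3"
      then have "E v0 t" using intQ[OF e(3) e(1) Q0(3) that(1)] by auto
      then show False using tX(2)[OF inX(1)] esym by blast
    qed
    moreover have "\<not> between oQ v3 t v6"
    proof
      assume "between oQ v3 t v6"
      then have "E v1 t" using intQ[OF e(4) e(6) Q0(1) that(1)] by auto
      then show False using tX(2)[OF inX(2)] esym by blast
    qed
    ultimately show ?thesis by auto
  qed
  have b356: "between oQ v5 v3 v6"
  proof -
    have "\<not> between oQ v3 v5 v6" using intQ[OF e(4) e(6) Q0(1) Q0(3)] n(2) by auto
    moreover have "\<not> between oQ v5 v6 v3" using intQ[OF e(3) e(1) Q0(3) Q0(4)] n(1) by auto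
    ultimately show ?thesis using dQ unfolding between_def by auto
  qed
  have n4a: "\<not> between oQ v4 v5 v3" using intQ[OF e(5) e(4) Q0(2) Q0(3)] n(2) by auto
  have n4b: "\<not> between oQ v4 v6 v3" using intQ[OF e(2) e(1) Q0(2) Q0(4)] n(1) by auto
  have nA: "\<not> between oP v0 v2 v1"
  proof
    assume "between oP v0 v2 v1"
    then have "E v4 v2" using intP[OF esym[OF e(2)] esym[OF e(5)] P0(1) P0(3)] by auto
    then show False using n(3) esym by auto
  qed
  have sides: "(between oQ y v5 v3 \<and> between oQ z v6 v3) \<or> (between oQ z v5 v3 \<and> between oQ y v6 v3)"
  proof -
    have ty: "oQ y \<noteq> oQ v5" "oQ y \<noteq> oQ v6" "\<not> between oQ v5 y v3" "\<not> between oQ v3 y v6"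
      using tfacts[OF yz(1) yz(3)] by auto
    have tz: "oQ z \<noteq> oQ v5" "oQ z \<noteq> oQ v6" "\<not> between oQ v5 z v3" "\<not> between oQ v3 z v6"
      using tfacts[OF yz(2) yz(5)] by auto
    show ?thesis by (rule sides_btw[OF byz b356 ty tz])
  qed
  have Acase: "between oP v2 v0 v1 \<or> between oP v2 v1 v0"
    using nA dP unfolding between_def by auto
  have direct: False if A: "between oP v2 v0 v1" and t: "t \<in> Q" "t \<in> D" "t2 \<in> D" "E t t2" "between oQ t v5 v3"
    and ct: "E\<^sup>*\<^sup>* t v5" for t t2
  proof (rule core[of v0 v1 v2 v3 v5 t Xs t2])
    show "\<And>x. x \<in> Xs \<Longrightarrow> x \<in> Q \<Longrightarrow> x = v5 \<or> between oQ t v5 x"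
    proof -
      fix x assume "x \<in> Xs" "x \<in> Q"
      then have "x = v3 \<or> x = v4 \<or> x = v5 \<or> x = v6" using XQ by auto
      then show "x = v5 \<or> between oQ t v5 x"
        using t(5) n4a b356 dQ unfolding between_def by auto
    qed
    show "\<And>x. x \<in> Xs \<Longrightarrow> x \<in> P \<Longrightarrow> x = v0 \<or> (E x v3 \<and> \<not> E x v5)"
      using XP e n by auto
  qed (use P0 Q0 e n A t ct inX in \<open>simp_all add: D_def\<close>)
  have mirror: False if A: "between oP v2 v1 v0" and t: "t \<in> Q" "t \<in> D" "t2 \<in> D" "E t t2" "between oQ t v6 v3"
    and ct: "E\<^sup>*\<^sup>* t v6" for t t2
  proof (rule core[of v1 v0 v2 v3 v6 t Xs t2])
    show "\<And>x. x \<in> Xs \<Longrightarrow> x \<in> Q \<Longrightarrow> x = v6 \<or> between oQ t v6 x"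
    proof -
      fix x assume "x \<in> Xs" "x \<in> Q"
      then have "x = v3 \<or> x = v4 \<or> x = v5 \<or> x = v6" using XQ by auto
      then show "x = v6 \<or> between oQ t v6 x"
        using t(5) n4b b356 dQ unfolding between_def by auto
    qed
    show "\<And>x. x \<in> Xs \<Longrightarrow> x \<in> P \<Longrightarrow> x = v1 \<or> (E x v3 \<and> \<not> E x v6)"
      using XP e n by auto
  qed (use P0 Q0 e n A t ct inX in \<open>simp_all add: D_def\<close>)
  show False
  proof (cases "between oP v2 v0 v1")
    case True
    from sides show False
    proof
      assume "between oQ y v5 v3 \<and> between oQ z v6 v3"
      then show False using direct[OF True yz(1) yz(3) yz(4) yz(7)] conn(1) by auto
    next
      assume "between oQ z v5 v3 \<and> between oQ y v6 v3"
      then show False using direct[OF True yz(2) yz(5) yz(6) yz(8)] conn(3) by auto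
    qed
  next
    case False
    then have A2: "between oP v2 v1 v0" using Acase by auto
    from sides show False
    proof
      assume "between oQ y v5 v3 \<and> between oQ z v6 v3"
      then show False using mirror[OF A2 yz(2) yz(5) yz(6) yz(8)] conn(4) by auto
    next
      assume "between oQ z v5 v3 \<and> between oQ y v6 v3"
      then show False using mirror[OF A2 yz(1) yz(3) yz(4) yz(7)] conn(2) by auto
    qed
  qed
qed

lemma sideP: "E u v \<Longrightarrow> v \<in> Q \<Longrightarrow> u \<in> P" using bip disj by blast
lemma sideQ: "E u v \<Longrightarrow> v \<in> P \<Longrightarrow> u \<in> Q" using bip disj by blast

lemma mid:
  fixes f :: "nat \<Rightarrow> 'a"
  assumes ind: "\<And>u v. u < 35 \<Longrightarrow> v < 35 \<Longrightarrow> EH u v = E (f u) (f v)"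
  and injf: "inj_on f {..<35}"
  and conn: "\<And>u v. u < 35 \<Longrightarrow> v < 35 \<Longrightarrow> E\<^sup>*\<^sup>* (f u) (f v)"
  and idx: "m < 5" "i < 5" "k < 5" "m \<noteq> i" "m \<noteq> k"
  and sd: "f (7*m+4) \<in> Q" "f (7*i+4) \<in> Q" "f (7*k+4) \<in> Q"
  and btw: "between oQ (f (7*i+4)) (f (7*m+4)) (f (7*k+4))"
  shows False
proof -
  have Ef: "E (f (7*c+a)) (f (7*c+b)) = Xe a b" if "c < 5" "a < 7" "b < 7" for c a b
  proof -
    have "7*c+a < 35" "7*c+b < 35" using that by linarith+
    then show ?thesis using ind EH_same[OF that] by metis
  qed
  have nf: "\<not> E (f (7*c+a)) (f (7*c'+b)) \<and> f (7*c+a) \<noteq> f (7*c'+b)"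
    if "c < 5" "c' < 5" "c \<noteq> c'" "a < 7" "b < 7" for c c' a b
  proof -
    have l: "7*c+a < 35" "7*c'+b < 35" using that by linarith+
    have "(7*c+a) div 7 = c" "(7*c'+b) div 7 = c'" using that by simp_all
    then have "7*c+a \<noteq> 7*c'+b" using that(3) by metis
    then have "f (7*c+a) \<noteq> f (7*c'+b)" using injf l by (meson inj_onD lessThan_iff)
    then show ?thesis using ind[OF l] EH_diff[OF that] by auto
  qed
  define Xs where "Xs = {f (7*m+1), f (7*m+2), f (7*m), f (7*m+4), f (7*m+5), f (7*m+3), f (7*m+6)}"
  have inD: "f (7*c+a) \<in> {u. u \<notin> Xs \<and> (\<forall>x\<in>Xs. \<not> E u x)}" if "c < 5" "c \<noteq> m" "a < 7" for c a
    using nf[OF that(1) idx(1) that(2) that(3), of 0] nf[OF that(1) idx(1) that(2) that(3), of 1]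
      nf[OF that(1) idx(1) that(2) that(3), of 2] nf[OF that(1) idx(1) that(2) that(3), of 3]
      nf[OF that(1) idx(1) that(2) that(3), of 4] nf[OF that(1) idx(1) that(2) that(3), of 5]
      nf[OF that(1) idx(1) that(2) that(3), of 6]
    unfolding Xs_def by simp
  have xe: "Xe 1 4" "Xe 1 5" "Xe 1 3" "Xe 2 4" "Xe 2 5" "Xe 2 6" "Xe 0 4" "Xe 4 1"
    "\<not> Xe 1 6" "\<not> Xe 2 3" "\<not> Xe 0 5" "\<not> Xe 0 3" "\<not> Xe 0 6" unfolding Xe_def by auto
  have e: "E (f (7*m+1)) (f (7*m+4))" "E (f (7*m+1)) (f (7*m+5))" "E (f (7*m+1)) (f (7*m+3))"
    "E (f (7*m+2)) (f (7*m+4))" "E (f (7*m+2)) (f (7*m+5))" "E (f (7*m+2)) (f (7*m+6))"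
    "E (f (7*m)) (f (7*m+4))"
    using Ef[OF idx(1), of 1 4] Ef[OF idx(1), of 1 5] Ef[OF idx(1), of 1 3] Ef[OF idx(1), of 2 4]
      Ef[OF idx(1), of 2 5] Ef[OF idx(1), of 2 6] Ef[OF idx(1), of 0 4] xe by simp_all
  have n: "\<not> E (f (7*m+1)) (f (7*m+6))" "\<not> E (f (7*m+2)) (f (7*m+3))" "\<not> E (f (7*m)) (f (7*m+5))"
    "\<not> E (f (7*m)) (f (7*m+3))" "\<not> E (f (7*m)) (f (7*m+6))"
    using Ef[OF idx(1), of 1 6] Ef[OF idx(1), of 2 3] Ef[OF idx(1), of 0 5] Ef[OF idx(1), of 0 3]
      Ef[OF idx(1), of 0 6] xe by simp_all
  have P0: "f (7*m+1) \<in> P" "f (7*m+2) \<in> P" "f (7*m) \<in> P"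
    using sideP[OF e(1) sd(1)] sideP[OF e(4) sd(1)] sideP[OF e(7) sd(1)] by auto
  have Q0: "f (7*m+5) \<in> Q" "f (7*m+3) \<in> Q" "f (7*m+6) \<in> Q"
    using sideQ[OF esym[OF e(2)] P0(1)] sideQ[OF esym[OF e(3)] P0(1)] sideQ[OF esym[OF e(6)] P0(2)] by auto
  have yy: "E (f (7*i+4)) (f (7*i+1))" "E (f (7*k+4)) (f (7*k+1))"
    using Ef[OF idx(2), of 4 1] Ef[OF idx(3), of 4 1] xe by simp_all
  have cc: "E\<^sup>*\<^sup>* (f (7*c+4)) (f (7*m+a))" if "c < 5" "a < 7" for c a
    using conn that idx(1) by simp
  show False
  proof (rule middle[of "f (7*m+1)" "f (7*m+2)" "f (7*m)" "f (7*m+4)" "f (7*m+5)" "f (7*m+3)" "f (7*m+6)"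
        "f (7*i+4)" "f (7*k+4)" "f (7*i+1)" "f (7*k+1)"])
  qed (use P0 Q0 sd e n yy btw inD[of i 4] inD[of i 1] inD[of k 4] inD[of k 1] idx cc[of i 3] cc[of i 6] cc[of k 3] cc[of k 6]
       in \<open>simp_all add: Xs_def\<close>)
qed

lemma three:
  fixes f :: "nat \<Rightarrow> 'a"
  assumes ind: "\<And>u v. u < 35 \<Longrightarrow> v < 35 \<Longrightarrow> EH u v = E (f u) (f v)"
  and injf: "inj_on f {..<35}"
  and conn: "\<And>u v. u < 35 \<Longrightarrow> v < 35 \<Longrightarrow> E\<^sup>*\<^sup>* (f u) (f v)"
  and idx: "i < 5" "j < 5" "k < 5" "i \<noteq> j" "j \<noteq> k" "i \<noteq> k"
  and sd: "f (7*i+4) \<in> Q" "f (7*j+4) \<in> Q" "f (7*k+4) \<in> Q"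
  shows False
proof -
  have l: "7*i+4 < 35" "7*j+4 < 35" "7*k+4 < 35" using idx by linarith+
  have "7*i+4 \<noteq> 7*j+4" "7*j+4 \<noteq> 7*k+4" "7*i+4 \<noteq> 7*k+4" using idx by auto
  then have "f (7*i+4) \<noteq> f (7*j+4)" "f (7*j+4) \<noteq> f (7*k+4)" "f (7*i+4) \<noteq> f (7*k+4)"
    using injf l by (meson inj_onD lessThan_iff)+
  then have d: "oQ (f (7*i+4)) \<noteq> oQ (f (7*j+4))" "oQ (f (7*j+4)) \<noteq> oQ (f (7*k+4))" "oQ (f (7*i+4)) \<noteq> oQ (f (7*k+4))"
    using neqQ sd by auto
  have "between oQ (f (7*i+4)) (f (7*j+4)) (f (7*k+4)) \<or> between oQ (f (7*j+4)) (f (7*i+4)) (f (7*k+4))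
      \<or> between oQ (f (7*i+4)) (f (7*k+4)) (f (7*j+4))"
    using three_pos[OF d] unfolding between_def by blast
  then show False
  proof (elim disjE)
    assume "between oQ (f (7*i+4)) (f (7*j+4)) (f (7*k+4))"
    then show False using mid[OF ind injf conn, of j i k] idx sd by auto
  next
    assume "between oQ (f (7*j+4)) (f (7*i+4)) (f (7*k+4))"
    then show False using mid[OF ind injf conn, of i j k] idx sd by auto
  next
    assume "between oQ (f (7*i+4)) (f (7*k+4)) (f (7*j+4))"
    then show False using mid[OF ind injf conn, of k i j] idx sd by auto
  qed
qed

end


theorem proposition1:
  shows "\<exists>(V :: nat set) E. biconvex_graph V E \<and> disconnected_graph V E \<and>
           \<not> (\<exists>(V' :: nat set) E'. biconvex_graph V' E' \<and> connected_graph V' E' \<and>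
                induced_subgraph V E V' E')"
proof -
  have notemb: "\<not> (\<exists>(V' :: nat set) E'. biconvex_graph V' E' \<and> connected_graph V' E' \<and>
                induced_subgraph {..<35} EH V' E')"
  proof
    assume "\<exists>(V' :: nat set) E'. biconvex_graph V' E' \<and> connected_graph V' E' \<and>
                induced_subgraph {..<35} EH V' E'"
    then obtain V' :: "nat set" and E' where bg: "biconvex_graph V' E'" and cg: "connected_graph V' E'"
      and isg: "induced_subgraph {..<35} EH V' E'" by blast
    from bg obtain A B oA oB where gr: "graph V' E'" and bp: "bipartition V' E' A B"
      and io: "inj_on oA A" "inj_on oB B" and cA: "\<forall>a\<in>A. consecutive B oB (nbhd E' a)"
      and cB: "\<forall>b\<in>B. consecutive A oA (nbhd E' b)"
      unfolding biconvex_graph_def biconvex_wrt_def by blast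
    have es: "\<And>u v. E' u v \<Longrightarrow> E' v u" using gr unfolding graph_def by blast
    have bip1: "\<And>u v. E' u v \<Longrightarrow> (u \<in> A \<and> v \<in> B) \<or> (u \<in> B \<and> v \<in> A)"
      using bp unfolding bipartition_def by blast
    have dj: "A \<inter> B = {}" "A \<union> B = V'" using bp unfolding bipartition_def by auto
    interpret ab: bcx A B oA oB E'
    proof
      show "A \<inter> B = {}" by (rule dj(1))
    qed (use bip1 es io cA cB in auto)
    interpret ba: bcx B A oB oA E'
    proof
      show "B \<inter> A = {}" using dj(1) by auto
    qed (use bip1 es io cA cB in auto)
    from isg obtain f where injf: "inj_on f {..<35}" and fV: "f ` {..<35} \<subseteq> V'"
      and ind0: "\<forall>u\<in>{..<35}. \<forall>v\<in>{..<35}. EH u v = E' (f u) (f v)"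
      unfolding induced_subgraph_def by blast
    have ind: "\<And>u v. u < 35 \<Longrightarrow> v < 35 \<Longrightarrow> EH u v = E' (f u) (f v)" using ind0 by auto
    have conn: "\<And>u v. u < 35 \<Longrightarrow> v < 35 \<Longrightarrow> E'\<^sup>*\<^sup>* (f u) (f v)"
      using cg fV unfolding connected_graph_def by auto
    have inAB: "f (7*c+4) \<in> A \<or> f (7*c+4) \<in> B" if "c < 5" for c
    proof -
      have "7*c+4 < 35" using that by linarith
      then have "f (7*c+4) \<in> V'" using fV by auto
      then show ?thesis using dj(2) by auto
    qed
    show False
    proof (rule pigeon5[of "\<lambda>c. f (7*c+4) \<in> B"])
      fix i j k :: nat
      assume "i < 5" "j < 5" "k < 5" "i \<noteq> j" "j \<noteq> k" "i \<noteq> k"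
        "f (7*i+4) \<in> B" "f (7*j+4) \<in> B" "f (7*k+4) \<in> B"
      then show False using ab.three[OF ind injf conn, of i j k] by auto
    next
      fix i j k :: nat
      assume h: "i < 5" "j < 5" "k < 5" "i \<noteq> j" "j \<noteq> k" "i \<noteq> k"
        "f (7*i+4) \<notin> B" "f (7*j+4) \<notin> B" "f (7*k+4) \<notin> B"
      then have "f (7*i+4) \<in> A" "f (7*j+4) \<in> A" "f (7*k+4) \<in> A" using inAB by blast+
      then show False using ba.three[OF ind injf conn, of i j k] h by auto
    qed
  qed
  show ?thesis
    by (rule exI[of _ "{..<35}"], rule exI[of _ EH]) (use EH_biconvex EH_disconnected notemb in blast)
qed


end
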